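(* For every unweighted congestion game $\mathcal{G}$ with affine latency functions, $\mathrm{Apx}^1_\emptyset(\mathcal{G})\le 2+\sqrt{5}$.
   Context: A weighted congestion game consists of a finite set $[n]=\{1,\dots,n\}$ of players, a finite set $E$ of resources, for each player $i$ a weight $w_i>0$ and a nonempty finite strategy set $\Sigma_i\subseteq 2^E$, and for each resource $e$ a latency function $\ell_e:\mathbb{R}_{\ge 0}\to\mathbb{R}_{\ge 0}$. It is unweighted if $w_i=1$ for all $i$. Affine latency functions means $\ell_e(x)=\alpha_e x+\beta_e$ with $\alpha_e,\beta_e\ge 0$. For a (possibly partial) profile in which each player in some subset $P\subseteq[n]$ has chosen a strategy $s_i$, the congestion of $e$ is $L_e=\sum_{i\in P:\,e\in s_i}w_i$ and the cost of a player $i\in P$ is $\sum_{e\in s_i}\ell_e(L_e)$. For a full profile $S$, $\mathrm{SUM}(S)=\sum_{i\in[n]}c_i(S)$ and $S^*$ minimizes $\mathrm{SUM}$. A one-round walk from the empty strategy profile: starting with no player having chosen a strategy, the players arrive one at a time in some order, and each arriving player selects a best response, i.e., a strategy in her strategy set minimizing her cost given the strategies already chosen by the previously arrived players (later players not yet present); the outcome is the full profile after all $n$ players have chosen. $\mathrm{Apx}^1_\emptyset(\mathcal{G})$ is the maximum, over all orderings of the players and all choices among best responses, of $\mathrm{SUM}(\text{outcome})/\mathrm{SUM}(S^* )$. *)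

theory Defs
  imports Complex_Main
begin

text \<open>Unweighted congestion games with affine latencies l_e(x) = alpha e * x + beta e.
  Players are 0..n-1; a (possibly partial) profile is a function s :: nat => 'e set,
  together with the set P of players that are present.\<close>

definition load :: "nat set \<Rightarrow> (nat \<Rightarrow> 'e set) \<Rightarrow> 'e \<Rightarrow> real" where
  "load P s e = real (card {i \<in> P. e \<in> s i})"

definition pcost :: "('e \<Rightarrow> real) \<Rightarrow> ('e \<Rightarrow> real) \<Rightarrow> nat set \<Rightarrow> (nat \<Rightarrow> 'e set) \<Rightarrow> nat \<Rightarrow> real" where
  "pcost \<alpha> \<beta> P s i = (\<Sum>e\<in>s i. \<alpha> e * load P s e + \<beta> e)"

definition feasible :: "nat \<Rightarrow> (nat \<Rightarrow> 'e set set) \<Rightarrow> (nat \<Rightarrow> 'e set) \<Rightarrow> bool" where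
  "feasible n \<Sigma> s \<longleftrightarrow> (\<forall>i<n. s i \<in> \<Sigma> i)"

definition SUMcost :: "nat \<Rightarrow> ('e \<Rightarrow> real) \<Rightarrow> ('e \<Rightarrow> real) \<Rightarrow> (nat \<Rightarrow> 'e set) \<Rightarrow> real" where
  "SUMcost n \<alpha> \<beta> s = (\<Sum>i<n. pcost \<alpha> \<beta> {..<n} s i)"

text \<open>An arrival order is a list enumerating the players exactly once. The k-th arriving player
  pi!k, facing the players set (take k pi) already present, picks a best response.\<close>
definition one_round_walk_outcome ::
  "nat \<Rightarrow> (nat \<Rightarrow> 'e set set) \<Rightarrow> ('e \<Rightarrow> real) \<Rightarrow> ('e \<Rightarrow> real) \<Rightarrow> nat list \<Rightarrow> (nat \<Rightarrow> 'e set) \<Rightarrow> bool" where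
  "one_round_walk_outcome n \<Sigma> \<alpha> \<beta> \<pi> s \<longleftrightarrow>
     distinct \<pi> \<and> set \<pi> = {..<n} \<and>
     (\<forall>k<n. s (\<pi>!k) \<in> \<Sigma> (\<pi>!k) \<and>
        (\<forall>t\<in>\<Sigma> (\<pi>!k).
           pcost \<alpha> \<beta> (insert (\<pi>!k) (set (take k \<pi>))) s (\<pi>!k)
             \<le> pcost \<alpha> \<beta> (insert (\<pi>!k) (set (take k \<pi>))) (s((\<pi>!k) := t)) (\<pi>!k)))"

definition OPT :: "nat \<Rightarrow> (nat \<Rightarrow> 'e set set) \<Rightarrow> ('e \<Rightarrow> real) \<Rightarrow> ('e \<Rightarrow> real) \<Rightarrow> real" where
  "OPT n \<Sigma> \<alpha> \<beta> = Inf {SUMcost n \<alpha> \<beta> s | s. feasible n \<Sigma> s}"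

definition Apx1_empty :: "nat \<Rightarrow> (nat \<Rightarrow> 'e set set) \<Rightarrow> ('e \<Rightarrow> real) \<Rightarrow> ('e \<Rightarrow> real) \<Rightarrow> real" where
  "Apx1_empty n \<Sigma> \<alpha> \<beta> =
     Sup {SUMcost n \<alpha> \<beta> s / OPT n \<Sigma> \<alpha> \<beta> | s. \<exists>\<pi>. one_round_walk_outcome n \<Sigma> \<alpha> \<beta> \<pi> s}"

end

theory Submission
  imports Defs
begin

lemma key_ineq:
  fixes a b :: nat
  shows "2 * real a ^ 2 + (1 + sqrt 5) * (2 * real a * real b + 2 * real b - real a ^ 2 - real a)
         \<le> 2 * (2 + sqrt 5) * real b ^ 2"
proof -
  define t where "t = sqrt 5"
  have tt: "t * t = 5" unfolding t_def by simp
  have tt': "\<And>z. t * (t * z) = 5 * z" using tt by (metis mult.assoc)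
  have t2: "t > 2" unfolding t_def by (simp add: real_less_rsqrt)
  have t3: "t < 3" unfolding t_def using real_sqrt_less_mono[of 5 "3^2"] by simp
  define x where "x = real a"
  define y where "y = real b"
  have x0: "x \<ge> 0" unfolding x_def by simp
  have goal: "2 * x ^ 2 + (1 + t) * (2 * x * y + 2 * y - x ^ 2 - x) \<le> 2 * (2 + t) * y ^ 2"
  proof (cases "b = 0")
    case True
    then have "y = 0" unfolding y_def by simp
    moreover have "(t - 1) * x^2 \<ge> 0" using t2 by simp
    moreover have "(1 + t) * x \<ge> 0" using t2 x0 by simp
    ultimately show ?thesis by (simp add: algebra_simps power2_eq_square)
  next
    case False
    show ?thesis
    proof (cases "b = 1")
      case True
      then have y1: "y = 1" unfolding y_def by simp
      have id: "2 * (2 + t) * y ^ 2 - (2 * x ^ 2 + (1 + t) * (2 * x * y + 2 * y - x ^ 2 - x))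
                = (t - 1) * ((x - 1) * (x - (1 + t) / 2))"
        using tt y1 by (simp add: algebra_simps power2_eq_square tt' field_simps)
      have "(x - 1) * (x - (1 + t) / 2) \<ge> 0"
      proof (cases "a \<le> 1")
        case True
        then have "x \<le> 1" unfolding x_def by simp
        then show ?thesis using t2 by (intro mult_nonpos_nonpos) auto
      next
        case False
        then have "x \<ge> 2" unfolding x_def by simp
        then show ?thesis using t3 by (intro mult_nonneg_nonneg) auto
      qed
      then have "(t - 1) * ((x - 1) * (x - (1 + t) / 2)) \<ge> 0" using t2 by simp
      then show ?thesis using id by linarith
    next
      case False
      with \<open>b \<noteq> 0\<close> have "b \<ge> 2" by simp
      then have y2: "y \<ge> 2" unfolding y_def by simp
      have id: "2 * (2 + t) * y ^ 2 - (2 * x ^ 2 + (1 + t) * (2 * x * y + 2 * y - x ^ 2 - x))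
                = (t - 1) * (x - (3 + t) / 2 * y + (3 + t) / 4) ^ 2 + 2 * y - 1 - t / 2"
        using tt by (simp add: algebra_simps power2_eq_square tt' field_simps)
      have "(t - 1) * (x - (3 + t) / 2 * y + (3 + t) / 4) ^ 2 \<ge> 0" using t2 by simp
      then show ?thesis using id y2 t3 by linarith
    qed
  qed
  then show ?thesis unfolding x_def y_def t_def .
qed
lemma load_cong:
  assumes "\<forall>j\<in>P. s j = s' j"
  shows "load P s e = load P s' e"
proof -
  have "{i \<in> P. e \<in> s i} = {i \<in> P. e \<in> s' i}" using assms by auto
  then show ?thesis unfolding load_def by simp
qed

lemma pcost_cong:
  assumes "\<forall>j\<in>P. s j = s' j" and "s i = s' i"
  shows "pcost \<alpha> \<beta> P s i = pcost \<alpha> \<beta> P s' i"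
  unfolding pcost_def using load_cong[OF assms(1)] assms(2) by simp

lemma load_insert:
  assumes "finite Q" "p \<notin> Q"
  shows "load (insert p Q) s e = load Q s e + (if e \<in> s p then 1 else 0)"
proof (cases "e \<in> s p")
  case True
  then have "{i \<in> insert p Q. e \<in> s i} = insert p {i \<in> Q. e \<in> s i}" by auto
  moreover have "card (insert p {i \<in> Q. e \<in> s i}) = Suc (card {i \<in> Q. e \<in> s i})"
    using assms by (intro card_insert_disjoint) auto
  ultimately show ?thesis using True unfolding load_def by simp
next
  case False
  then have "{i \<in> insert p Q. e \<in> s i} = {i \<in> Q. e \<in> s i}" by auto
  then show ?thesis using False unfolding load_def by simp
qed

lemma load_nonneg: "load P s e \<ge> 0"
  unfolding load_def by simp

lemma double_count:
  assumes "finite E" "finite I" "\<forall>i\<in>I. s i \<subseteq> E"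
  shows "(\<Sum>i\<in>I. \<Sum>e\<in>s i. g e) = (\<Sum>e\<in>E. load I s e * g e)"
proof -
  have "(\<Sum>i\<in>I. \<Sum>e\<in>s i. g e) = (\<Sum>i\<in>I. \<Sum>e\<in>E. if e \<in> s i then g e else 0)"
  proof (rule sum.cong)
    fix i assume "i \<in> I"
    then have "s i \<subseteq> E" using assms by auto
    then have "E \<inter> s i = s i" by auto
    then show "(\<Sum>e\<in>s i. g e) = (\<Sum>e\<in>E. if e \<in> s i then g e else 0)"
      using sum.inter_restrict[OF assms(1), of g "s i"] by simp
  qed simp
  also have "\<dots> = (\<Sum>e\<in>E. \<Sum>i\<in>I. if e \<in> s i then g e else 0)"
    by (rule sum.swap)
  also have "\<dots> = (\<Sum>e\<in>E. load I s e * g e)"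
  proof (rule sum.cong)
    fix e assume "e \<in> E"
    have "(\<Sum>i\<in>I. if e \<in> s i then g e else 0) = (\<Sum>i\<in>I \<inter> {i. e \<in> s i}. g e)"
      using sum.inter_restrict[OF assms(2), of "\<lambda>_. g e" "{i. e \<in> s i}"] by simp
    also have "I \<inter> {i. e \<in> s i} = {i \<in> I. e \<in> s i}" by auto
    finally show "(\<Sum>i\<in>I. if e \<in> s i then g e else 0) = load I s e * g e"
      unfolding load_def by simp
  qed simp
  finally show ?thesis .
qed

lemma nth_notin_take:
  assumes "distinct \<pi>" "k < length \<pi>"
  shows "\<pi> ! k \<notin> set (take k \<pi>)"
proof
  assume "\<pi> ! k \<in> set (take k \<pi>)"
  then obtain j where j: "j < length (take k \<pi>)" "take k \<pi> ! j = \<pi> ! k"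
    by (auto simp: in_set_conv_nth)
  then have "j < k" "\<pi> ! j = \<pi> ! k" using assms by auto
  then show False using assms nth_eq_iff_index_eq by fastforce
qed

lemma arrival_sum:
  assumes d: "distinct \<pi>" and fE: "finite E" and sub: "\<forall>j<length \<pi>. s (\<pi>!j) \<subseteq> E"
  shows "k \<le> length \<pi> \<Longrightarrow>
    2 * (\<Sum>j<k. pcost \<alpha> \<beta> (insert (\<pi>!j) (set (take j \<pi>))) s (\<pi>!j))
    = (\<Sum>e\<in>E. \<alpha> e * load (set (take k \<pi>)) s e * (load (set (take k \<pi>)) s e + 1)
               + 2 * \<beta> e * load (set (take k \<pi>)) s e)"
proof (induction k)
  case 0
  show ?case by (simp add: load_def)
next
  case (Suc k)
  then have k: "k < length \<pi>" by simp
  define p where "p = \<pi> ! k"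
  define Q where "Q = set (take k \<pi>)"
  have pQ: "p \<notin> Q" unfolding p_def Q_def using nth_notin_take[OF d k] .
  have fQ: "finite Q" unfolding Q_def by simp
  have Qs: "set (take (Suc k) \<pi>) = insert p Q"
    by (simp add: take_Suc_conv_app_nth k p_def Q_def)
  have L: "\<And>e. load (insert p Q) s e = load Q s e + (if e \<in> s p then 1 else 0)"
    using load_insert[OF fQ pQ] .
  have spE: "s p \<subseteq> E" using sub k unfolding p_def by auto
  have pc: "pcost \<alpha> \<beta> (insert p Q) s p = (\<Sum>e\<in>s p. \<alpha> e * (load Q s e + 1) + \<beta> e)"
    unfolding pcost_def using L by simp
  let ?f = "\<lambda>e. \<alpha> e * load Q s e * (load Q s e + 1) + 2 * \<beta> e * load Q s e"
  let ?h = "\<lambda>e. 2 * (\<alpha> e * (load Q s e + 1) + \<beta> e)"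
  have "(\<Sum>e\<in>E. \<alpha> e * load (insert p Q) s e * (load (insert p Q) s e + 1)
               + 2 * \<beta> e * load (insert p Q) s e)
        = (\<Sum>e\<in>E. ?f e + (if e \<in> s p then ?h e else 0))"
  proof (rule sum.cong)
    fix e assume "e \<in> E"
    show "\<alpha> e * load (insert p Q) s e * (load (insert p Q) s e + 1) + 2 * \<beta> e * load (insert p Q) s e
        = ?f e + (if e \<in> s p then ?h e else 0)"
      by (cases "e \<in> s p") (simp_all add: L algebra_simps)
  qed simp
  also have "\<dots> = (\<Sum>e\<in>E. ?f e) + (\<Sum>e\<in>E. if e \<in> s p then ?h e else 0)"
    by (rule sum.distrib)
  also have "(\<Sum>e\<in>E. if e \<in> s p then ?h e else 0) = (\<Sum>e\<in>s p. ?h e)"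
  proof -
    have "E \<inter> s p = s p" using spE by auto
    then show ?thesis using sum.inter_restrict[OF fE, of ?h "s p"] by simp
  qed
  also have "(\<Sum>e\<in>s p. ?h e) = 2 * pcost \<alpha> \<beta> (insert p Q) s p"
    unfolding pc by (simp add: sum_distrib_left)
  also have "(\<Sum>e\<in>E. ?f e) = 2 * (\<Sum>j<k. pcost \<alpha> \<beta> (insert (\<pi>!j) (set (take j \<pi>))) s (\<pi>!j))"
    using Suc.IH k unfolding Q_def by simp
  finally show ?case using Qs by (simp add: p_def Q_def algebra_simps)
qed
lemma per_e:
  fixes a b :: nat and x y :: real
  assumes "x \<ge> 0" "y \<ge> 0"
  shows "real a * (x * real a + y) + (1 + sqrt 5) / 2 *
           (2 * real b * (x * (real a + 1) + y) - (x * real a * (real a + 1) + 2 * y * real a))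
         \<le> (2 + sqrt 5) * (real b * (x * real b + y))"
proof -
  define t where "t = sqrt 5"
  have t0: "t \<ge> 0" unfolding t_def by simp
  define K where "K = 2 * (2 + t) * real b ^ 2
      - (2 * real a ^ 2 + (1 + t) * (2 * real a * real b + 2 * real b - real a ^ 2 - real a))"
  have K0: "K \<ge> 0" using key_ineq[of a b] unfolding K_def t_def by simp
  have id: "(2 + t) * (real b * (x * real b + y)) - (real a * (x * real a + y) + (1 + t) / 2 *
           (2 * real b * (x * (real a + 1) + y) - (x * real a * (real a + 1) + 2 * y * real a)))
          = x * K / 2 + y * (real b + t * real a)"
    unfolding K_def by (simp add: algebra_simps power2_eq_square field_simps)
  have "x * K / 2 + y * (real b + t * real a) \<ge> 0"
    using assms K0 t0 by simp
  then show ?thesis using id unfolding t_def by linarith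
qed

lemma walk_bound:
  assumes fE: "finite E"
    and \<Sigma>: "\<forall>i<n. \<Sigma> i \<noteq> {} \<and> finite (\<Sigma> i) \<and> (\<forall>S\<in>\<Sigma> i. S \<subseteq> E)"
    and ab: "\<forall>e\<in>E. \<alpha> e \<ge> 0 \<and> \<beta> e \<ge> 0"
    and w: "one_round_walk_outcome n \<Sigma> \<alpha> \<beta> \<pi> s"
    and f: "feasible n \<Sigma> S"
  shows "SUMcost n \<alpha> \<beta> s \<le> (2 + sqrt 5) * SUMcost n \<alpha> \<beta> S"
proof -
  from w have d: "distinct \<pi>" and sp: "set \<pi> = {..<n}"
    and br: "\<forall>k<n. s (\<pi>!k) \<in> \<Sigma> (\<pi>!k) \<and>
        (\<forall>t\<in>\<Sigma> (\<pi>!k).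
           pcost \<alpha> \<beta> (insert (\<pi>!k) (set (take k \<pi>))) s (\<pi>!k)
             \<le> pcost \<alpha> \<beta> (insert (\<pi>!k) (set (take k \<pi>))) (s((\<pi>!k) := t)) (\<pi>!k))"
    unfolding one_round_walk_outcome_def by auto
  have len: "length \<pi> = n" using distinct_card[OF d] sp by simp
  have pin: "\<And>k. k < n \<Longrightarrow> \<pi> ! k < n"
    using nth_mem[of _ \<pi>] len sp by auto
  have sfeas: "\<forall>i<n. s i \<in> \<Sigma> i"
  proof (intro allI impI)
    fix i assume "i < n"
    then have "i \<in> set \<pi>" using sp by simp
    then obtain k where "k < length \<pi>" "\<pi> ! k = i" by (auto simp: in_set_conv_nth)
    then show "s i \<in> \<Sigma> i" using br len by auto
  qed
  have sE: "\<forall>i\<in>{..<n}. s i \<subseteq> E" using sfeas \<Sigma> by auto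
  have SE: "\<forall>i\<in>{..<n}. S i \<subseteq> E" using f \<Sigma> unfolding feasible_def by auto
  define a where "a = (\<lambda>e. load {..<n} s e)"
  define b where "b = (\<lambda>e. load {..<n} S e)"
  have SUMs: "SUMcost n \<alpha> \<beta> s = (\<Sum>e\<in>E. a e * (\<alpha> e * a e + \<beta> e))"
    unfolding SUMcost_def pcost_def a_def
    using double_count[OF fE _ sE, of "\<lambda>e. \<alpha> e * load {..<n} s e + \<beta> e"] by simp
  have SUMS: "SUMcost n \<alpha> \<beta> S = (\<Sum>e\<in>E. b e * (\<alpha> e * b e + \<beta> e))"
    unfolding SUMcost_def pcost_def b_def
    using double_count[OF fE _ SE, of "\<lambda>e. \<alpha> e * load {..<n} S e + \<beta> e"] by simp
  have sub: "\<forall>j<length \<pi>. s (\<pi>!j) \<subseteq> E" using sE pin len by auto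
  have arr: "2 * (\<Sum>k<n. pcost \<alpha> \<beta> (insert (\<pi>!k) (set (take k \<pi>))) s (\<pi>!k))
      = (\<Sum>e\<in>E. \<alpha> e * a e * (a e + 1) + 2 * \<beta> e * a e)"
    using arrival_sum[OF d fE sub, of n \<alpha> \<beta>] len sp unfolding a_def by simp
  define h where "h = (\<lambda>e. \<alpha> e * (a e + 1) + \<beta> e)"
  have each: "pcost \<alpha> \<beta> (insert (\<pi>!k) (set (take k \<pi>))) s (\<pi>!k) \<le> (\<Sum>e\<in>S (\<pi>!k). h e)"
    if k: "k < n" for k
  proof -
    define p where "p = \<pi> ! k"
    define P where "P = insert p (set (take k \<pi>))"
    have pn: "p < n" using pin k unfolding p_def by simp
    have Psub: "P \<subseteq> {..<n}" unfolding P_def using pn sp set_take_subset[of k \<pi>] by auto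
    have Sp: "S p \<in> \<Sigma> p" using f pn unfolding feasible_def by auto
    have SpE: "S p \<subseteq> E" using SE pn by auto
    have 1: "pcost \<alpha> \<beta> P s p \<le> pcost \<alpha> \<beta> P (s(p := S p)) p"
      using br k Sp unfolding P_def p_def by auto
    have 2: "pcost \<alpha> \<beta> P (s(p := S p)) p \<le> (\<Sum>e\<in>S p. h e)"
      unfolding pcost_def h_def fun_upd_same
    proof (rule sum_mono)
      fix e assume e: "e \<in> S p"
      have "{i \<in> P. e \<in> (s(p := S p)) i} \<subseteq> insert p {i \<in> {..<n}. e \<in> s i}"
        using Psub by auto
      then have "card {i \<in> P. e \<in> (s(p := S p)) i} \<le> card (insert p {i \<in> {..<n}. e \<in> s i})"
        by (intro card_mono) auto
      also have "\<dots> \<le> Suc (card {i \<in> {..<n}. e \<in> s i})" by (rule card_insert_le_m1) auto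
      finally have "load P (s(p := S p)) e \<le> a e + 1" unfolding load_def a_def by simp
      moreover have "\<alpha> e \<ge> 0" using ab e SpE by auto
      ultimately show "\<alpha> e * load P (s(p := S p)) e + \<beta> e \<le> \<alpha> e * (a e + 1) + \<beta> e"
        by (simp add: mult_left_mono)
    qed
    show ?thesis using 1 2 unfolding P_def p_def by simp
  qed
  have bij: "bij_betw ((!) \<pi>) {..<n} {..<n}"
    using bij_betw_nth[OF d] len sp by simp
  have reidx: "(\<Sum>k<n. \<Sum>e\<in>S (\<pi>!k). h e) = (\<Sum>i<n. \<Sum>e\<in>S i. h e)"
    using sum.reindex_bij_betw[OF bij, of "\<lambda>i. \<Sum>e\<in>S i. h e"] by simp
  have X: "(\<Sum>i<n. \<Sum>e\<in>S i. h e) = (\<Sum>e\<in>E. b e * h e)"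
    unfolding b_def using double_count[OF fE _ SE, of h] by simp
  have main: "(\<Sum>e\<in>E. \<alpha> e * a e * (a e + 1) + 2 * \<beta> e * a e) \<le> 2 * (\<Sum>e\<in>E. b e * h e)"
  proof -
    have "(\<Sum>k<n. pcost \<alpha> \<beta> (insert (\<pi>!k) (set (take k \<pi>))) s (\<pi>!k)) \<le> (\<Sum>k<n. \<Sum>e\<in>S (\<pi>!k). h e)"
      by (rule sum_mono) (use each in auto)
    then show ?thesis using arr reidx X by linarith
  qed
  define \<phi> where "\<phi> = (1 + sqrt 5) / 2"
  have \<phi>0: "\<phi> \<ge> 0" unfolding \<phi>_def by simp
  have pe: "a e * (\<alpha> e * a e + \<beta> e) + \<phi> * (2 * (b e * h e) - (\<alpha> e * a e * (a e + 1) + 2 * \<beta> e * a e))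
      \<le> (2 + sqrt 5) * (b e * (\<alpha> e * b e + \<beta> e))" if e: "e \<in> E" for e
  proof -
    have "\<alpha> e \<ge> 0" "\<beta> e \<ge> 0" using ab e by auto
    from per_e[OF this, of "card {i \<in> {..<n}. e \<in> s i}" "card {i \<in> {..<n}. e \<in> S i}"]
    show ?thesis unfolding a_def b_def h_def load_def \<phi>_def by (simp add: algebra_simps)
  qed
  have "(\<Sum>e\<in>E. a e * (\<alpha> e * a e + \<beta> e) + \<phi> * (2 * (b e * h e) - (\<alpha> e * a e * (a e + 1) + 2 * \<beta> e * a e)))
      \<le> (\<Sum>e\<in>E. (2 + sqrt 5) * (b e * (\<alpha> e * b e + \<beta> e)))"
    by (rule sum_mono) (use pe in auto)
  also have "\<dots> = (2 + sqrt 5) * SUMcost n \<alpha> \<beta> S" unfolding SUMS by (simp add: sum_distrib_left)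
  finally have fin: "(\<Sum>e\<in>E. a e * (\<alpha> e * a e + \<beta> e) + \<phi> * (2 * (b e * h e) - (\<alpha> e * a e * (a e + 1) + 2 * \<beta> e * a e)))
      \<le> (2 + sqrt 5) * SUMcost n \<alpha> \<beta> S" .
  have eq: "(\<Sum>e\<in>E. a e * (\<alpha> e * a e + \<beta> e) + \<phi> * (2 * (b e * h e) - (\<alpha> e * a e * (a e + 1) + 2 * \<beta> e * a e)))
     = SUMcost n \<alpha> \<beta> s + \<phi> * (2 * (\<Sum>e\<in>E. b e * h e) - (\<Sum>e\<in>E. \<alpha> e * a e * (a e + 1) + 2 * \<beta> e * a e))"
    unfolding SUMs sum.distrib sum_distrib_left[symmetric] sum_subtractf by simp
  from fin eq have "SUMcost n \<alpha> \<beta> s + \<phi> * (2 * (\<Sum>e\<in>E. b e * h e) - (\<Sum>e\<in>E. \<alpha> e * a e * (a e + 1) + 2 * \<beta> e * a e))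
      \<le> (2 + sqrt 5) * SUMcost n \<alpha> \<beta> S" by simp
  moreover have "\<phi> * (2 * (\<Sum>e\<in>E. b e * h e) - (\<Sum>e\<in>E. \<alpha> e * a e * (a e + 1) + 2 * \<beta> e * a e)) \<ge> 0"
    using main \<phi>0 by simp
  ultimately show ?thesis by linarith
qed
definition brsel :: "(nat \<Rightarrow> 'e set set) \<Rightarrow> ('e \<Rightarrow> real) \<Rightarrow> ('e \<Rightarrow> real) \<Rightarrow> (nat \<Rightarrow> 'e set) \<Rightarrow> nat \<Rightarrow> 'e set" where
  "brsel \<Sigma> \<alpha> \<beta> s k = (SOME t. t \<in> \<Sigma> k \<and>
     (\<forall>t'\<in>\<Sigma> k. pcost \<alpha> \<beta> (insert k {..<k}) (s(k := t)) k \<le> pcost \<alpha> \<beta> (insert k {..<k}) (s(k := t')) k))"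

primrec greedy :: "(nat \<Rightarrow> 'e set set) \<Rightarrow> ('e \<Rightarrow> real) \<Rightarrow> ('e \<Rightarrow> real) \<Rightarrow> nat \<Rightarrow> (nat \<Rightarrow> 'e set)" where
  "greedy \<Sigma> \<alpha> \<beta> 0 = (\<lambda>_. {})"
| "greedy \<Sigma> \<alpha> \<beta> (Suc k) = (greedy \<Sigma> \<alpha> \<beta> k)(k := brsel \<Sigma> \<alpha> \<beta> (greedy \<Sigma> \<alpha> \<beta> k) k)"

lemma greedy_stable: "j < m \<Longrightarrow> greedy \<Sigma> \<alpha> \<beta> m j = greedy \<Sigma> \<alpha> \<beta> (Suc j) j"
  by (induction m) (auto simp: less_Suc_eq)

lemma brsel_prop:
  assumes "A \<noteq> {}" "finite A" "A = \<Sigma> k"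
  shows "brsel \<Sigma> \<alpha> \<beta> s k \<in> \<Sigma> k \<and>
     (\<forall>t'\<in>\<Sigma> k. pcost \<alpha> \<beta> (insert k {..<k}) (s(k := brsel \<Sigma> \<alpha> \<beta> s k)) k
        \<le> pcost \<alpha> \<beta> (insert k {..<k}) (s(k := t')) k)"
proof -
  let ?f = "\<lambda>t. pcost \<alpha> \<beta> (insert k {..<k}) (s(k := t)) k"
  have "Min (?f ` A) \<in> ?f ` A" using assms by (intro Min_in) auto
  then obtain t where t: "t \<in> A" "?f t = Min (?f ` A)" by auto
  have "\<forall>t'\<in>A. ?f t \<le> ?f t'" using t assms by auto
  then have "\<exists>t. t \<in> \<Sigma> k \<and> (\<forall>t'\<in>\<Sigma> k. ?f t \<le> ?f t')" using t assms by auto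
  then show ?thesis unfolding brsel_def by (rule someI_ex)
qed

lemma walk_exists:
  assumes \<Sigma>: "\<forall>i<n. \<Sigma> i \<noteq> {} \<and> finite (\<Sigma> i) \<and> (\<forall>S\<in>\<Sigma> i. S \<subseteq> E)"
  shows "\<exists>\<pi> s. one_round_walk_outcome n \<Sigma> \<alpha> \<beta> \<pi> s"
proof -
  define s where "s = greedy \<Sigma> \<alpha> \<beta> n"
  have main: "\<forall>k<n. s ([0..<n] ! k) \<in> \<Sigma> ([0..<n] ! k) \<and>
        (\<forall>t\<in>\<Sigma> ([0..<n] ! k).
           pcost \<alpha> \<beta> (insert ([0..<n] ! k) (set (take k [0..<n]))) s ([0..<n] ! k)
             \<le> pcost \<alpha> \<beta> (insert ([0..<n] ! k) (set (take k [0..<n]))) (s(([0..<n] ! k) := t)) ([0..<n] ! k))"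
  proof (intro allI impI)
    fix k assume k: "k < n"
    have nth: "[0..<n] ! k = k" using k by simp
    have tk: "set (take k [0..<n]) = {..<k}" using k by (auto simp: take_upt)
    let ?g = "greedy \<Sigma> \<alpha> \<beta> k"
    have B: "brsel \<Sigma> \<alpha> \<beta> ?g k \<in> \<Sigma> k \<and>
     (\<forall>t'\<in>\<Sigma> k. pcost \<alpha> \<beta> (insert k {..<k}) (?g(k := brsel \<Sigma> \<alpha> \<beta> ?g k)) k
        \<le> pcost \<alpha> \<beta> (insert k {..<k}) (?g(k := t')) k)"
      using \<Sigma> k by (intro brsel_prop[of "\<Sigma> k"]) auto
    have sk: "s k = brsel \<Sigma> \<alpha> \<beta> ?g k" unfolding s_def using greedy_stable[OF k] by simp
    have agree: "\<forall>j\<in>insert k {..<k}. s j = (?g(k := brsel \<Sigma> \<alpha> \<beta> ?g k)) j"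
    proof
      fix j assume "j \<in> insert k {..<k}"
      then show "s j = (?g(k := brsel \<Sigma> \<alpha> \<beta> ?g k)) j"
      proof
        assume "j = k" then show ?thesis using sk by simp
      next
        assume j: "j \<in> {..<k}"
        then have "s j = greedy \<Sigma> \<alpha> \<beta> (Suc j) j" unfolding s_def using k by (intro greedy_stable) auto
        moreover have "?g j = greedy \<Sigma> \<alpha> \<beta> (Suc j) j" using j by (intro greedy_stable) auto
        ultimately show ?thesis using j by auto
      qed
    qed
    have agree2: "\<forall>j\<in>insert k {..<k}. (s(k := t)) j = (?g(k := t)) j" for t
    proof
      fix j assume "j \<in> insert k {..<k}"
      then show "(s(k := t)) j = (?g(k := t)) j"
      proof
        assume "j = k" then show ?thesis by simp
      next
        assume j: "j \<in> {..<k}"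
        then have "s j = greedy \<Sigma> \<alpha> \<beta> (Suc j) j" unfolding s_def using k by (intro greedy_stable) auto
        moreover have "?g j = greedy \<Sigma> \<alpha> \<beta> (Suc j) j" using j by (intro greedy_stable) auto
        ultimately show ?thesis using j by auto
      qed
    qed
    show "s ([0..<n] ! k) \<in> \<Sigma> ([0..<n] ! k) \<and>
        (\<forall>t\<in>\<Sigma> ([0..<n] ! k).
           pcost \<alpha> \<beta> (insert ([0..<n] ! k) (set (take k [0..<n]))) s ([0..<n] ! k)
             \<le> pcost \<alpha> \<beta> (insert ([0..<n] ! k) (set (take k [0..<n]))) (s(([0..<n] ! k) := t)) ([0..<n] ! k))"
      unfolding nth tk
    proof (intro conjI ballI)
      show "s k \<in> \<Sigma> k" using B sk by simp
      fix t assume t: "t \<in> \<Sigma> k"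
      have "pcost \<alpha> \<beta> (insert k {..<k}) s k = pcost \<alpha> \<beta> (insert k {..<k}) (?g(k := brsel \<Sigma> \<alpha> \<beta> ?g k)) k"
        using agree by (intro pcost_cong) auto
      also have "\<dots> \<le> pcost \<alpha> \<beta> (insert k {..<k}) (?g(k := t)) k" using B t by auto
      also have "\<dots> = pcost \<alpha> \<beta> (insert k {..<k}) (s(k := t)) k"
        using agree2[of t] by (intro pcost_cong[symmetric]) auto
      finally show "pcost \<alpha> \<beta> (insert k {..<k}) s k \<le> pcost \<alpha> \<beta> (insert k {..<k}) (s(k := t)) k" .
    qed
  qed
  have "one_round_walk_outcome n \<Sigma> \<alpha> \<beta> [0..<n] s"
    unfolding one_round_walk_outcome_def using main by auto
  then show ?thesis by blast
qed

lemma SUMcost_nonneg: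
  assumes "\<forall>i<n. \<Sigma> i \<noteq> {} \<and> finite (\<Sigma> i) \<and> (\<forall>S\<in>\<Sigma> i. S \<subseteq> E)"
    and "\<forall>e\<in>E. \<alpha> e \<ge> 0 \<and> \<beta> e \<ge> 0"
    and "feasible n \<Sigma> s"
  shows "SUMcost n \<alpha> \<beta> s \<ge> 0"
  unfolding SUMcost_def pcost_def
proof (intro sum_nonneg)
  fix i e assume i: "i \<in> {..<n}" and e: "e \<in> s i"
  have "e \<in> E" using assms(1,3) i e unfolding feasible_def by auto
  then show "\<alpha> e * load {..<n} s e + \<beta> e \<ge> 0" using assms(2) load_nonneg[of "{..<n}" s e] by auto
qed

theorem mainTheorem7:
  fixes n :: nat and E :: "'e set" and \<Sigma> :: "nat \<Rightarrow> 'e set set"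
    and \<alpha> \<beta> :: "'e \<Rightarrow> real"
  assumes "finite E"
    and "\<forall>i<n. \<Sigma> i \<noteq> {} \<and> finite (\<Sigma> i) \<and> (\<forall>S\<in>\<Sigma> i. S \<subseteq> E)"
    and "\<forall>e\<in>E. \<alpha> e \<ge> 0 \<and> \<beta> e \<ge> 0"
  shows "Apx1_empty n \<Sigma> \<alpha> \<beta> \<le> 2 + sqrt 5"
proof -
  let ?Y = "{SUMcost n \<alpha> \<beta> s | s. feasible n \<Sigma> s}"
  define S0 where "S0 = (\<lambda>i. SOME t. t \<in> \<Sigma> i)"
  have "feasible n \<Sigma> S0" unfolding feasible_def S0_def
    using assms(2) by (simp add: some_in_eq)
  then have Yne: "?Y \<noteq> {}" by blast
  have opt0: "OPT n \<Sigma> \<alpha> \<beta> \<ge> 0" unfolding OPT_def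
    by (rule cInf_greatest[OF Yne]) (use SUMcost_nonneg[OF assms(2,3)] in auto)
  obtain \<pi>0 s0 where "one_round_walk_outcome n \<Sigma> \<alpha> \<beta> \<pi>0 s0"
    using walk_exists[OF assms(2)] by blast
  then have Xne: "{SUMcost n \<alpha> \<beta> s / OPT n \<Sigma> \<alpha> \<beta> | s. \<exists>\<pi>. one_round_walk_outcome n \<Sigma> \<alpha> \<beta> \<pi> s} \<noteq> {}"
    by blast
  show ?thesis unfolding Apx1_empty_def
  proof (rule cSup_least[OF Xne])
    fix x assume "x \<in> {SUMcost n \<alpha> \<beta> s / OPT n \<Sigma> \<alpha> \<beta> | s. \<exists>\<pi>. one_round_walk_outcome n \<Sigma> \<alpha> \<beta> \<pi> s}"
    then obtain s \<pi> where x: "x = SUMcost n \<alpha> \<beta> s / OPT n \<Sigma> \<alpha> \<beta>"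
      and w: "one_round_walk_outcome n \<Sigma> \<alpha> \<beta> \<pi> s" by blast
    have rho: "(2 + sqrt 5) > (0::real)" by (simp add: add_pos_nonneg)
    have "SUMcost n \<alpha> \<beta> s / (2 + sqrt 5) \<le> OPT n \<Sigma> \<alpha> \<beta>" unfolding OPT_def
    proof (rule cInf_greatest[OF Yne])
      fix y assume "y \<in> ?Y"
      then obtain S where y: "y = SUMcost n \<alpha> \<beta> S" and f: "feasible n \<Sigma> S" by blast
      have "SUMcost n \<alpha> \<beta> s \<le> (2 + sqrt 5) * y"
        using walk_bound[OF assms w f] y by simp
      then show "SUMcost n \<alpha> \<beta> s / (2 + sqrt 5) \<le> y" using rho by (simp add: divide_le_eq mult.commute)
    qed
    then have le: "SUMcost n \<alpha> \<beta> s \<le> (2 + sqrt 5) * OPT n \<Sigma> \<alpha> \<beta>" using rho by (simp add: divide_le_eq mult.commute)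
    show "x \<le> 2 + sqrt 5"
    proof (cases "OPT n \<Sigma> \<alpha> \<beta> = 0")
      case True then show ?thesis using x rho by simp
    next
      case False
      then have "OPT n \<Sigma> \<alpha> \<beta> > 0" using opt0 by simp
      then show ?thesis using x le by (simp add: divide_le_eq mult.commute)
    qed
  qed
qed

end
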